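(* $\displaystyle\lim_{m\to\infty} sd(\mathbb{Z}_2\times Q_{2^{m+1}})=0.$
   Context: For a finite group $G$, $L(G)$ is the set of all subgroups of $G$ and $sd(G)=\frac{1}{|L(G)|^2}|\{(H,K)\in L(G)^2: HK=KH\}|$. $Q_{2^{m+1}}=\langle x,y\mid x^{2^m}=e,\ y^2=x^{2^{m-1}},\ y^{-1}xy=x^{-1}\rangle$ is the generalized quaternion group of order $2^{m+1}$ ($m\geq 2$). *)

theory Defs
  imports "HOL-Algebra.Algebra" "HOL-Analysis.Analysis"
begin

definition subgroup_lattice :: "('a, 'b) monoid_scheme \<Rightarrow> 'a set set" where
  "subgroup_lattice G = {H. subgroup H G}"

definition sd :: "('a, 'b) monoid_scheme \<Rightarrow> real" where
  "sd G = real (card {(H, K). H \<in> subgroup_lattice G \<and> K \<in> subgroup_lattice G \<and>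
                     H <#>\<^bsub>G\<^esub> K = K <#>\<^bsub>G\<^esub> H})
          / real (card (subgroup_lattice G)) ^ 2"

text \<open>Generalized quaternion group Q_{2^(m+1)} = <x,y | x^(2^m)=e, y^2=x^(2^(m-1)), y^-1 x y = x^-1>,
  modelled concretely by its normal form: the pair (i,a) with 0 \<le> i < 2^m, a \<in> {0,1}
  stands for x^i y^a.  Using y x^k = x^(-k) y and y^2 = x^(2^(m-1)):
  x^i y^a * x^k y^b = x^(i + (-1)^a k + a b 2^(m-1)) y^(a+b mod 2).\<close>
definition quaternion_group :: "nat \<Rightarrow> (int \<times> int) monoid" where
  "quaternion_group m =
    \<lparr> carrier = {0..<2^m} \<times> {0..<2},
      monoid.mult = (\<lambda>(i, a) (k, b).
         ((i + (if a = 0 then k else - k) + a * b * 2^(m - 1)) mod 2^m, (a + b) mod 2)),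
      one = (0, 0) \<rparr>"

abbreviation Z2 :: "int monoid" where
  "Z2 \<equiv> integer_mod_group 2"

end

theory Submission
  imports Defs "HOL-Computational_Algebra.Primes" "HOL-Real_Asymp.Real_Asymp"
begin

lemma modeq: fixes n x y :: int shows "n dvd (x - y) \<Longrightarrow> x mod n = y mod n"
  by (simp add: mod_eq_dvd_iff)
lemma qassoc: fixes h i k l a b w :: int
  assumes a: "a = 0 \<or> a = 1" and b: "b = 0 \<or> b = 1" and w: "w = 0 \<or> w = 1"
  shows "(((i + (if a = 0 then k else - k) + a*b*h) mod (2*h)) + (if (a+b) mod 2 = 0 then l else -l) + ((a+b) mod 2) * w * h) mod (2*h)
   = (i + (if a = 0 then ((k + (if b = 0 then l else -l) + b * w * h) mod (2*h)) else - ((k + (if b = 0 then l else -l) + b * w * h) mod (2*h))) + a*((b+w) mod 2)*h) mod (2*h)"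
  using a b w
    apply (elim disjE)
    apply simp_all
    apply (rule modeq, simp only: minus_div_mult_eq_mod[symmetric], simp add: algebra_simps)+
  done

lemma mod_gen1: fixes n :: int shows "(x mod n - y + z) mod n = (x - y + z) mod n"
  by (rule modeq, simp only: minus_div_mult_eq_mod[symmetric], simp add: algebra_simps)

lemma Q_mult: "(i, a) \<otimes>\<^bsub>quaternion_group m\<^esub> (k, b) =
   ((i + (if a = 0 then k else - k) + a * b * 2^(m - 1)) mod 2^m, (a + b) mod 2)"
  by (simp add: quaternion_group_def)

lemma Q_carrier: "carrier (quaternion_group m) = {0..<2^m} \<times> {0..<2}"
  by (simp add: quaternion_group_def)

lemma Q_one: "\<one>\<^bsub>quaternion_group m\<^esub> = (0,0)"
  by (simp add: quaternion_group_def)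

lemma pow2m: "m \<ge> 1 \<Longrightarrow> (2::int)^m = 2 * 2^(m-1)"
  by (metis Suc_diff_1 less_le_trans power_Suc zero_less_one)

lemma group_Q: assumes "m \<ge> 1" shows "group (quaternion_group m)"
proof (rule groupI)
  define h :: int where "h = 2^(m-1)"
  have hh: "(2::int)^m = 2*h" using assms pow2m h_def by simp
  have hpos: "h > 0" by (simp add: h_def)
  have hm: "2^(m - Suc 0) = h" by (simp add: h_def)
  show "\<one>\<^bsub>quaternion_group m\<^esub> \<in> carrier (quaternion_group m)" by (simp add: Q_one Q_carrier)
  fix x y z assume x: "x \<in> carrier (quaternion_group m)" and y: "y \<in> carrier (quaternion_group m)"
    and z: "z \<in> carrier (quaternion_group m)"
  obtain i a where xe: "x = (i,a)" by force
  obtain k b where ye: "y = (k,b)" by force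
  obtain l w where ze: "z = (l,w)" by force
  have a: "a = 0 \<or> a = 1" and b: "b = 0 \<or> b = 1" and w: "w = 0 \<or> w = 1"
    using x y z xe ye ze by (auto simp: Q_carrier)
  have i: "0 \<le> i" "i < 2*h" using x xe hh by (auto simp: Q_carrier)
  show "x \<otimes>\<^bsub>quaternion_group m\<^esub> y \<in> carrier (quaternion_group m)"
    using a b by (auto simp: xe ye Q_mult Q_carrier)
  have e2: "((a + b) mod 2 + w) mod 2 = (a + (b + w) mod 2) mod 2" by (simp add: mod_simps add.assoc)
  show "x \<otimes>\<^bsub>quaternion_group m\<^esub> y \<otimes>\<^bsub>quaternion_group m\<^esub> z = x \<otimes>\<^bsub>quaternion_group m\<^esub> (y \<otimes>\<^bsub>quaternion_group m\<^esub> z)"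
    unfolding xe ye ze Q_mult hh h_def[symmetric] prod.inject using qassoc[OF a b w, of i k h l] e2 by blast
  show "\<one>\<^bsub>quaternion_group m\<^esub> \<otimes>\<^bsub>quaternion_group m\<^esub> x = x"
    using a i by (auto simp: xe Q_one Q_mult hh)
  show "\<exists>y\<in>carrier (quaternion_group m). y \<otimes>\<^bsub>quaternion_group m\<^esub> x = \<one>\<^bsub>quaternion_group m\<^esub>"
  proof (cases "a = 0")
    case True
    then show ?thesis using hpos
      by (intro bexI[of _ "((-i) mod 2^m, 0)"]) (auto simp: xe Q_one Q_mult Q_carrier hh mod_simps)
  next
    case False
    then have "a = 1" using a by simp
    then show ?thesis using hpos
      by (intro bexI[of _ "((i + h) mod 2^m, 1)"]) (auto simp: xe Q_one Q_mult Q_carrier hh hm mod_gen1)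
  qed
qed


abbreviation GG :: "nat \<Rightarrow> (int \<times> int \<times> int) monoid" where
  "GG m \<equiv> DirProd Z2 (quaternion_group m)"

lemma G_group: "m \<ge> 1 \<Longrightarrow> group (GG m)"
  by (intro DirProd_group group_Q group_integer_mod_group)

lemma G_carrier: "carrier (GG m) = {0..<2} \<times> {0..<2^m} \<times> {0..<2}"
  by (simp add: Q_carrier carrier_integer_mod_group)

declare carrier_DirProd[simp del]

lemma ab01: "(a::int) \<in> {0..<2} \<longleftrightarrow> a = 0 \<or> a = 1" by (simp only: atLeastLessThan_iff) presburger

lemma G_mem: "(c,i,a) \<in> carrier (GG m) \<longleftrightarrow> (c = 0 \<or> c = 1) \<and> 0 \<le> i \<and> i < 2^m \<and> (a = 0 \<or> a = 1)"
  unfolding G_carrier mem_Times_iff fst_conv snd_conv ab01[of c] ab01[of a] atLeastLessThan_iff[of i] by blast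

lemma G_mult: "(c, i, a) \<otimes>\<^bsub>GG m\<^esub> (d, k, b) =
   ((c + d) mod 2, (i + (if a = 0 then k else - k) + a * b * 2^(m - 1)) mod 2^m, (a + b) mod 2)"
  by (simp add: Q_mult)

lemma G_one: "\<one>\<^bsub>GG m\<^esub> = (0,0,0)"
  by (simp add: Q_one)

lemma G_inv: assumes m: "m \<ge> 1" and x: "(c,i,a) \<in> carrier (GG m)"
  shows "inv\<^bsub>GG m\<^esub> (c,i,a) = (c, (if a = 0 then (-i) mod 2^m else (i + 2^(m-1)) mod 2^m), a)"
proof -
  interpret group "GG m" using G_group m by blast
  define h :: int where "h = 2^(m-1)"
  have hh: "(2::int)^m = 2*h" using m pow2m h_def by simp
  have hpos: "h > 0" by (simp add: h_def)
  have hm: "2^(m - Suc 0) = h" by (simp add: h_def)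
  have a: "a = 0 \<or> a = 1" and c: "c = 0 \<or> c = 1" and i: "0 \<le> i" "i < 2*h" using x[unfolded G_mem] hh by auto
  show ?thesis
  proof (rule inv_equality)
    show "(c,i,a) \<in> carrier (GG m)" by (rule x)
    show "(c, (if a = 0 then (-i) mod 2^m else (i + 2^(m-1)) mod 2^m), a) \<in> carrier (GG m)"
      using a c hpos unfolding G_mem hh h_def[symmetric] by auto
    show "(c, (if a = 0 then (-i) mod 2^m else (i + 2^(m-1)) mod 2^m), a) \<otimes>\<^bsub>GG m\<^esub> (c,i,a) = \<one>\<^bsub>GG m\<^esub>"
    proof (cases "a = 0")
      case True
      have "(c + c) mod 2 = 0" using c by auto
      then show ?thesis using True by (simp only: G_mult G_one if_True) (simp add: mod_simps)
    next
      case False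
      then have a1: "a = 1" using a by simp
      have "(c + c) mod 2 = 0" using c by auto
      moreover have "((i + h) mod (2*h) - i + h) mod (2*h) = 0" by (simp add: mod_gen1)
      ultimately show ?thesis using a1 by (simp only: G_mult G_one hh h_def[symmetric]) (simp add: hm)
    qed
  qed
qed


lemma L_finite: "finite (subgroup_lattice (GG m))"
proof -
  have "subgroup_lattice (GG m) \<subseteq> Pow (carrier (GG m))"
    unfolding subgroup_lattice_def by (blast dest: subgroup.subset)
  moreover have "finite (carrier (GG m))" unfolding G_carrier by simp
  ultimately show ?thesis by (meson finite_Pow_iff finite_subset)
qed

definition Hc :: "nat \<Rightarrow> int \<Rightarrow> int \<Rightarrow> (int \<times> int \<times> int) set" where
  "Hc m c i = {(0,0,0), (c,i,1), (0,2^(m-1),0), (c,i+2^(m-1),1)}"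

lemma modr: fixes x y n :: int shows "0 \<le> y \<Longrightarrow> y < n \<Longrightarrow> n dvd (x - y) \<Longrightarrow> x mod n = y"
  by (metis mod_eq_dvd_iff mod_pos_pos_trivial)

lemma Hc_sub: assumes m: "m \<ge> 1" and c: "c = 0 \<or> c = 1" and i: "0 \<le> i" "i < 2^(m-1)"
  shows "subgroup (Hc m c i) (GG m)"
proof -
  interpret group "GG m" using G_group m by blast
  define h :: int where "h = 2^(m-1)"
  have hh: "(2::int)^m = 2*h" using m pow2m h_def by simp
  have hpos: "h > 0" by (simp add: h_def)
  have hm: "2^(m - Suc 0) = h" by (simp add: h_def)
  have i': "0 \<le> i" "i < h" using i h_def by auto
  have cm: "c mod 2 = c" using c by auto
  have cc: "(c + c) mod 2 = 0" "(0 + c) mod 2 = c" "(c + 0) mod 2 = c" using c by auto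
  have e1: "(i - (i + h) + h) mod (2*h) = 0" by simp
  have e2: "(i + h - i + h) mod (2*h) = 0" by simp
  have e3: "(i + h - (i + h) + h) mod (2*h) = h" using hpos by simp
  have e4: "(i - i + h) mod (2*h) = h" using hpos by simp
  have e5: "(i - h) mod (2*h) = i + h" using i' by (intro modr) auto
  have e6: "(i + h - h) mod (2*h) = i" using i' by simp
  have e7: "(h + h) mod (2*h) = 0" by simp
  have e8: "(h + i) mod (2*h) = i + h" using i' by (simp add: add.commute)
  have e9: "(h + (i + h)) mod (2*h) = i" using i' by (intro modr) auto
  have e10: "(0::int) mod (2*h) = 0" "h mod (2*h) = h" "i mod (2*h) = i" "(i + h) mod (2*h) = i + h"
    "(0 + h) mod (2*h) = h" "(h + 0) mod (2*h) = h" "(0 + i) mod (2*h) = i" "(i + 0) mod (2*h) = i"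
    "(0 + (i + h)) mod (2*h) = i + h" "(i + h + 0) mod (2*h) = i + h" "(i + h - 0) mod (2*h) = i + h"
    "(i - 0) mod (2*h) = i" "(h - 0) mod (2*h) = h" "(0 - 0) mod (2*h) = 0" "(0 + 0) mod (2*h) = 0"
    using i' hpos by auto
  have e11: "(i - h + h) mod (2*h) = i" "(i + h - h + h) mod (2*h) = i + h" using i' by auto
  have e12: "(- i) mod (2*h) = (- i) mod (2*h)" by simp
  show ?thesis
  proof (rule subgroupI)
    show "Hc m c i \<subseteq> carrier (GG m)" using c i' hpos
      unfolding Hc_def hm h_def[symmetric] by (auto simp: G_mem hh)
    show "Hc m c i \<noteq> {}" by (simp add: Hc_def)
    fix x y assume x: "x \<in> Hc m c i" and y: "y \<in> Hc m c i"
    have xc: "x \<in> carrier (GG m)" using x \<open>Hc m c i \<subseteq> carrier (GG m)\<close> by blast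
    have e13: "(- h) mod (2*h) = h" "(i + h + h) mod (2*h) = i" using i' by (intro modr; simp)+
    show "inv\<^bsub>GG m\<^esub> x \<in> Hc m c i"
      using x xc unfolding Hc_def h_def[symmetric] insert_iff empty_iff
      apply (elim disjE)
      apply (simp_all only: G_inv[OF m] hh hm)
      apply (simp_all add: e10 e13 hm)
      done
    show "x \<otimes>\<^bsub>GG m\<^esub> y \<in> Hc m c i"
      using x y unfolding Hc_def h_def[symmetric] insert_iff empty_iff
      apply (elim disjE)
      apply (simp_all only: G_mult hh hm)
      apply (simp_all add: cc e1 e2 e3 e4 e5 e6 e7 e8 e9 e10 e11 hm cm)
      done
  qed
qed


lemma card_L_ge: assumes m: "m \<ge> 1" shows "2^m \<le> card (subgroup_lattice (GG m))"
proof -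
  define h :: int where "h = 2^(m-1)"
  have hh: "(2::nat)^m = 2 * 2^(m-1)" using m
    by (metis Suc_diff_1 less_le_trans power_Suc zero_less_one)
  let ?I = "{0..<2::int} \<times> {0..<h}"
  have inj: "inj_on (\<lambda>(c,i). Hc m c i) ?I"
  proof (rule inj_onI, clarify)
    fix c i c' i' assume a: "c \<in> {0..<2}" "i \<in> {0..<h}" "c' \<in> {0..<2}" "i' \<in> {0..<h}"
      and e: "Hc m c i = Hc m c' i'"
    have "(c,i,1) \<in> Hc m c i" by (simp add: Hc_def)
    then have "(c,i,1) \<in> Hc m c' i'" using e by simp
    then show "c = c' \<and> i = i'" using a by (auto simp: Hc_def h_def)
  qed
  have cardI: "card ?I = 2^m"
  proof -
    have "card ?I = 2 * nat h" by (simp add: card_cartesian_product)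
    also have "nat h = 2^(m-1)" by (simp add: h_def nat_power_eq)
    finally show ?thesis using hh by simp
  qed
  have sub: "(\<lambda>(c,i). Hc m c i) ` ?I \<subseteq> subgroup_lattice (GG m)"
  proof clarify
    fix c i assume "c \<in> {0..<2::int}" "i \<in> {0..<h}"
    then show "Hc m c i \<in> subgroup_lattice (GG m)"
      using Hc_sub[OF m, of c i] unfolding subgroup_lattice_def h_def ab01 by auto
  qed
  have "card ((\<lambda>(c,i). Hc m c i) ` ?I) = 2^m" using card_image[OF inj] cardI by simp
  then show ?thesis using card_mono[OF L_finite sub] by simp
qed


lemma cyc_sub:
  fixes S :: "int set" and n :: int
  assumes n: "n = 2^m" and Ssub: "S \<subseteq> {0..<n}" and S0: "0 \<in> S"
    and Sadd: "\<And>x y. x \<in> S \<Longrightarrow> y \<in> S \<Longrightarrow> (x + y) mod n \<in> S"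
    and Sneg: "\<And>x. x \<in> S \<Longrightarrow> (- x) mod n \<in> S"
  shows "\<exists>k\<le>m. S = {x \<in> {0..<n}. 2^k dvd x}"
proof (cases "S = {0}")
  case True
  have "{x \<in> {0..<n}. 2^m dvd x} = {0}"
  proof safe
    fix x assume "x \<in> {0..<n}" "2^m dvd x"
    then show "x = 0" using n by (auto simp: zdvd_not_zless dest: zdvd_imp_le)
  qed (auto simp: n)
  then show ?thesis using True by (intro exI[of _ m]) auto
next
  case False
  have npos: "n > 0" using n by simp
  have fin: "finite (S - {0})" using Ssub by (meson finite_Diff finite_atLeastLessThan_int finite_subset)
  have ne: "S - {0} \<noteq> {}" using False S0 by auto
  define d where "d = Min (S - {0})"
  have dS: "d \<in> S" "d \<noteq> 0" using Min_in[OF fin ne] d_def by auto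
  have dpos: "d > 0" "d < n" using dS Ssub by force+
  have dmin: "\<And>x. x \<in> S \<Longrightarrow> x \<noteq> 0 \<Longrightarrow> d \<le> x" using fin d_def by auto
  have nat_mult: "(int t * d) mod n \<in> S" for t :: nat
  proof (induction t)
    case 0 then show ?case using S0 by simp
  next
    case (Suc t)
    have "((int t * d) mod n + d) mod n \<in> S" using Sadd[OF Suc dS(1)] .
    then show ?case by (simp add: mod_simps algebra_simps)
  qed
  have int_mult: "(s * d) mod n \<in> S" for s :: int
  proof (cases "s \<ge> 0")
    case True then show ?thesis using nat_mult[of "nat s"] by simp
  next
    case False
    have "(- ((int (nat (-s)) * d) mod n)) mod n \<in> S" using Sneg[OF nat_mult[of "nat (-s)"]] .
    then show ?thesis using False by (simp add: mod_simps)
  qed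
  have small0: "\<And>x. x \<in> S \<Longrightarrow> 0 \<le> x \<Longrightarrow> x < d \<Longrightarrow> x = 0" using dmin by force
  have ddvd: "d dvd n"
  proof -
    have "((- (n div d)) * d) mod n = (n mod d) mod n"
    proof (rule modeq)
      have "(- (n div d)) * d - n mod d = - n" using div_mult_mod_eq[of n d] by (simp add: algebra_simps)
      then show "n dvd (- (n div d)) * d - n mod d" by simp
    qed
    also have "\<dots> = n mod d" proof (intro mod_pos_pos_trivial)
      show "0 \<le> n mod d" using dpos by simp
      have "n mod d < d" using dpos by simp
      then show "n mod d < n" using dpos by linarith
    qed
    finally have "n mod d \<in> S" using int_mult by metis
    then have "n mod d = 0" using small0 dpos by simp
    then show ?thesis by presburger
  qed
  obtain k where k: "k \<le> m" "d = 2^k"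
  proof -
    have "d dvd 2^m" using ddvd n by simp
    then obtain k where "k \<le> m" "normalize d = 2^k" using divides_primepow[of "2::int" d m] by auto
    moreover have "normalize d = d" using dpos by simp
    ultimately show ?thesis using that by simp
  qed
  have "S = {x \<in> {0..<n}. d dvd x}"
  proof safe
    fix x assume x: "x \<in> S"
    then show "x \<in> {0..<n}" using Ssub by auto
    have "(x + ((- (x div d)) * d) mod n) mod n \<in> S" using Sadd[OF x int_mult] .
    moreover have "(x + ((- (x div d)) * d) mod n) mod n = x mod d"
    proof -
      have "(x + ((- (x div d)) * d) mod n) mod n = (x - (x div d) * d) mod n" by (simp add: mod_simps)
      also have "\<dots> = (x mod d) mod n" by (simp add: minus_div_mult_eq_mod)
      also have "\<dots> = x mod d" proof (intro mod_pos_pos_trivial)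
        show "0 \<le> x mod d" using dpos by simp
        have "x mod d < d" using dpos by simp
        then show "x mod d < n" using dpos by linarith
      qed
      finally show ?thesis .
    qed
    ultimately have "x mod d \<in> S" by simp
    then have "x mod d = 0" using small0 dpos by simp
    then show "d dvd x" by presburger
  next
    fix x assume x: "x \<in> {0..<n}" "d dvd x"
    have "((x div d) * d) mod n \<in> S" using int_mult .
    then show "x \<in> S" using x by simp
  qed
  then show ?thesis using k by blast
qed


declare mult_DirProd[simp del]

definition AA :: "nat \<Rightarrow> (int \<times> int \<times> int) set" where
  "AA m = {x \<in> carrier (GG m). snd (snd x) = 0}"

definition LA :: "nat \<Rightarrow> (int \<times> int \<times> int) set set" where
  "LA m = {B \<in> subgroup_lattice (GG m). B \<subseteq> AA m}"

definition Mk :: "nat \<Rightarrow> nat \<Rightarrow> int set" where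
  "Mk m k = {x \<in> {0..<2^m}. 2^k dvd x}"

definition Rk :: "nat \<Rightarrow> nat \<Rightarrow> int \<Rightarrow> int set" where
  "Rk m k t = {x \<in> {0..<2^m}. x mod 2^k = t * (2^k div 2)}"

definition emb :: "int set \<times> int set \<Rightarrow> (int \<times> int \<times> int) set" where
  "emb XY = (\<lambda>i. (0,i,0)) ` fst XY \<union> (\<lambda>i. (1,i,0)) ` snd XY"

definition S1set :: "nat \<Rightarrow> int set set" where
  "S1set m = insert {} ((\<lambda>(k,t). Rk m k t) ` ({..m} \<times> {0,1}))"

lemma LA_struct: assumes m: "m \<ge> 1" and B: "B \<in> LA m"
  shows "B \<in> emb ` (((\<lambda>k. Mk m k) ` {..m}) \<times> S1set m)"
proof -
  interpret group "GG m" using G_group m by blast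
  have sg: "subgroup B (GG m)" and BA: "B \<subseteq> AA m" using B by (auto simp: LA_def subgroup_lattice_def)
  define n :: int where "n = 2^m"
  define B0 where "B0 = {i. (0,i,0) \<in> B}"
  define B1 where "B1 = {i. (1,i,0) \<in> B}"
  have Bcar: "\<And>c i a. (c,i,a) \<in> B \<Longrightarrow> (c = 0 \<or> c = 1) \<and> 0 \<le> i \<and> i < n \<and> a = 0"
  proof -
    fix c i a assume "(c,i,a) \<in> B"
    then have "(c,i,a) \<in> carrier (GG m) \<and> a = 0" using BA by (auto simp: AA_def)
    then show "(c = 0 \<or> c = 1) \<and> 0 \<le> i \<and> i < n \<and> a = 0" unfolding G_mem n_def by blast
  qed
  have Beq: "B = emb (B0, B1)"
  proof (rule subset_antisym; rule subsetI)
    fix x assume xB: "x \<in> B"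
    obtain c i a where xe: "x = (c,i,a)" by (cases x) auto
    have "(c = 0 \<or> c = 1) \<and> a = 0" using Bcar[of c i a] xB xe by blast
    then show "x \<in> emb (B0,B1)" using xB unfolding xe emb_def B0_def B1_def by force
  next
    fix x assume "x \<in> emb (B0,B1)"
    then show "x \<in> B" unfolding emb_def B0_def B1_def by force
  qed
  have mulB: "x \<in> B \<Longrightarrow> y \<in> B \<Longrightarrow> x \<otimes>\<^bsub>GG m\<^esub> y \<in> B" for x y using sg by (simp add: subgroup.m_closed)
  have invB: "x \<in> B \<Longrightarrow> inv\<^bsub>GG m\<^esub> x \<in> B" for x using sg by (simp add: subgroup.m_inv_closed)
  have inB: "x \<in> B \<Longrightarrow> x \<in> carrier (GG m)" for x using sg subgroup.subset by blast
  have oneB: "(0,0,0) \<in> B" using sg subgroup.one_closed G_one by metis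
  have "\<exists>k\<le>m. B0 = {x \<in> {0..<n}. 2^k dvd x}"
  proof (rule cyc_sub[OF n_def])
    show "B0 \<subseteq> {0..<n}" using Bcar by (auto simp: B0_def)
    show "0 \<in> B0" using oneB by (simp add: B0_def)
    fix x y assume x: "x \<in> B0" and y: "y \<in> B0"
    show "(x + y) mod n \<in> B0" using mulB[of "(0,x,0)" "(0,y,0)"] x y by (simp add: B0_def G_mult n_def)
    have "inv\<^bsub>GG m\<^esub> (0,x,0) = (0, (-x) mod 2^m, 0)" using G_inv[OF m inB[of "(0,x,0)"]] x by (simp add: B0_def)
    then show "(- x) mod n \<in> B0" using invB[of "(0,x,0)"] x by (simp add: B0_def n_def)
  qed
  then obtain k where k: "k \<le> m" "B0 = Mk m k" unfolding Mk_def n_def by blast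
  have kdvd: "(2::int)^k dvd n" using k(1) by (simp add: n_def le_imp_power_dvd)
  have B1S: "B1 \<in> S1set m"
  proof (cases "B1 = {}")
    case True then show ?thesis by (simp add: S1set_def)
  next
    case False
    then obtain j where j: "j \<in> B1" by blast
    have jr: "0 \<le> j" "j < n" using j Bcar by (auto simp: B1_def)
    have "(1,j,0) \<otimes>\<^bsub>GG m\<^esub> (1,j,0) \<in> B" using mulB j by (simp add: B1_def)
    moreover have "(1,j,0) \<otimes>\<^bsub>GG m\<^esub> (1,j,0) = (0, (2*j) mod n, 0)"
      unfolding G_mult n_def by (simp add: mult_2[symmetric])
    ultimately have "(2*j) mod n \<in> B0" by (simp add: B0_def)
    then have "2^k dvd (2*j) mod n" using k by (simp add: Mk_def n_def)
    then have d2j: "2^k dvd 2*j" using dvd_mod_iff[OF kdvd] by blast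
    obtain t where t: "t \<in> {0,1}" "j mod 2^k = t * (2^k div 2)"
    proof (cases k)
      case 0 then show ?thesis using that[of 0] by simp
    next
      case (Suc k')
      have "2 * 2^k' dvd 2 * j" using d2j Suc by simp
      then have "2^k' dvd j" by simp
      then obtain q where q: "j = 2^k' * q" by (elim dvdE)
      have "j mod 2^k = 2^k' * (q mod 2)" using Suc q
        by (simp add: mult.commute mod_mult_mult1 flip: mult_2_right)
      moreover have "q mod 2 \<in> {0,1}" unfolding insert_iff empty_iff by presburger
      ultimately show ?thesis using that[of "q mod 2"] Suc by (auto simp: mult.commute)
    qed
    have "B1 = Rk m k t"
    proof safe
      fix x assume x: "x \<in> B1"
      have xr: "0 \<le> x" "x < n" using x Bcar by (auto simp: B1_def)
      have "(1,x,0) \<otimes>\<^bsub>GG m\<^esub> inv\<^bsub>GG m\<^esub> (1,j,0) \<in> B" using mulB invB x j by (simp add: B1_def)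
      moreover have "inv\<^bsub>GG m\<^esub> (1,j,0) = (1, (-j) mod 2^m, 0)" using G_inv[OF m inB[of "(1,j,0)"]] j by (simp add: B1_def)
      ultimately have "(x - j) mod n \<in> B0"
        by (simp add: B0_def G_mult n_def mod_simps)
      then have "2^k dvd (x - j) mod n" using k by (simp add: Mk_def n_def)
      then have "2^k dvd (x - j)" using dvd_mod_iff[OF kdvd] by blast
      then have "x mod 2^k = j mod 2^k" by (simp add: mod_eq_dvd_iff)
      then show "x \<in> Rk m k t" using xr t by (simp add: Rk_def n_def)
    next
      fix x assume x: "x \<in> Rk m k t"
      have xr: "0 \<le> x" "x < n" and xm: "x mod 2^k = j mod 2^k" using x t by (auto simp: Rk_def n_def)
      have "2^k dvd (x - j)" using xm by (simp add: mod_eq_dvd_iff)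
      then have "2^k dvd (x - j) mod n" using dvd_mod_iff[OF kdvd] by blast
      then have "(x - j) mod n \<in> B0" using k n_def by (simp add: Mk_def)
      then have "(0, (x - j) mod n, 0) \<otimes>\<^bsub>GG m\<^esub> (1,j,0) \<in> B" using mulB j by (simp add: B0_def B1_def)
      then show "x \<in> B1" using xr by (simp add: B1_def G_mult n_def mod_simps)
    qed
    then show ?thesis using k t by (auto simp: S1set_def)
  qed
  show ?thesis using Beq k B1S by auto
qed


lemma card_LA: assumes m: "m \<ge> 1" shows "card (LA m) \<le> (m+1) * (2*(m+1)+1)"
proof -
  have fin1: "finite ((\<lambda>k. Mk m k) ` {..m})" by simp
  have fin2: "finite (S1set m)" by (simp add: S1set_def)
  have c1: "card ((\<lambda>k. Mk m k) ` {..m}) \<le> m+1" using card_image_le[of "{..m}" "\<lambda>k. Mk m k"] by simp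
  have c2: "card (S1set m) \<le> 2*(m+1)+1"
  proof -
    have "card (S1set m) \<le> Suc (card ((\<lambda>(k,t). Rk m k t) ` ({..m} \<times> {0,1})))"
      unfolding S1set_def by (rule card_insert_le_m1) simp_all
    also have "card ((\<lambda>(k,t). Rk m k t) ` ({..m} \<times> {0,1})) \<le> card ({..m} \<times> {0::int,1})"
      by (rule card_image_le) simp
    also have "card ({..m} \<times> {0::int,1}) = (m+1) * 2" by (simp add: card_cartesian_product)
    finally show ?thesis by simp
  qed
  have "card (LA m) \<le> card (emb ` (((\<lambda>k. Mk m k) ` {..m}) \<times> S1set m))"
    using LA_struct[OF m] fin1 fin2 by (intro card_mono) auto
  also have "\<dots> \<le> card (((\<lambda>k. Mk m k) ` {..m}) \<times> S1set m)" using fin1 fin2 by (intro card_image_le) simp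
  also have "\<dots> = card ((\<lambda>k. Mk m k) ` {..m}) * card (S1set m)" by (simp add: card_cartesian_product)
  also have "\<dots> \<le> (m+1) * (2*(m+1)+1)" using c1 c2 by (intro mult_mono) auto
  finally show ?thesis .
qed

definition TT :: "nat \<Rightarrow> (int \<times> int \<times> int) set" where
  "TT m = {x \<in> carrier (GG m). snd (snd x) = 1}"

definition Ly :: "nat \<Rightarrow> (int \<times> int \<times> int) set set" where
  "Ly m = subgroup_lattice (GG m) - LA m"

lemma carrier_split: "x \<in> carrier (GG m) \<Longrightarrow> x \<in> AA m \<or> x \<in> TT m"
proof -
  assume x: "x \<in> carrier (GG m)"
  obtain c i a where xe: "x = (c,i,a)" by (cases x) auto
  have "a = 0 \<or> a = 1" using x unfolding xe G_mem by blast
  then show ?thesis using x unfolding AA_def TT_def xe by auto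
qed

lemma coset_T: assumes m: "m \<ge> 1" and H: "subgroup H (GG m)" and h: "h \<in> H \<inter> TT m"
  shows "H \<inter> TT m = (\<lambda>b. h \<otimes>\<^bsub>GG m\<^esub> b) ` (H \<inter> AA m)"
proof -
  interpret group "GG m" using G_group m by blast
  have hc: "h \<in> carrier (GG m)" using h by (simp add: TT_def)
  obtain c i where he: "h = (c,i,1)" using h by (cases h) (auto simp: TT_def)
  have hinv: "inv\<^bsub>GG m\<^esub> h = (c, (i + 2^(m-1)) mod 2^m, 1)" using G_inv[OF m hc[unfolded he]] he by simp
  show ?thesis
  proof (rule subset_antisym; rule subsetI)
    fix y assume y: "y \<in> H \<inter> TT m"
    obtain c' i' where ye: "y = (c',i',1)" using y by (cases y) (auto simp: TT_def)
    have yc: "y \<in> carrier (GG m)" using y by (simp add: TT_def)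
    define b where "b = inv\<^bsub>GG m\<^esub> h \<otimes>\<^bsub>GG m\<^esub> y"
    have bH: "b \<in> H" unfolding b_def using H h y by (simp add: subgroup.m_closed subgroup.m_inv_closed)
    have bc: "b \<in> carrier (GG m)" unfolding b_def using hc yc by simp
    have "snd (snd b) = 0" unfolding b_def hinv ye G_mult by simp
    then have bA: "b \<in> H \<inter> AA m" using bH bc by (simp add: AA_def)
    have "h \<otimes>\<^bsub>GG m\<^esub> b = y" unfolding b_def using hc yc by (simp add: m_assoc[symmetric] del: one_DirProd)
    then show "y \<in> (\<lambda>b. h \<otimes>\<^bsub>GG m\<^esub> b) ` (H \<inter> AA m)" using bA by force
  next
    fix y assume "y \<in> (\<lambda>b. h \<otimes>\<^bsub>GG m\<^esub> b) ` (H \<inter> AA m)"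
    then obtain b where b: "b \<in> H \<inter> AA m" and ye: "y = h \<otimes>\<^bsub>GG m\<^esub> b" by blast
    have bc: "b \<in> carrier (GG m)" using b by (simp add: AA_def)
    obtain c' i' where be: "b = (c',i',0)" using b by (cases b) (auto simp: AA_def)
    have "y \<in> H" using H h b ye by (simp add: subgroup.m_closed)
    moreover have "y \<in> carrier (GG m)" using hc bc ye by simp
    moreover have "snd (snd y) = 1" unfolding ye he be G_mult by simp
    ultimately show "y \<in> H \<inter> TT m" by (simp add: TT_def)
  qed
qed

lemma card_T: assumes m: "m \<ge> 1" and H: "subgroup H (GG m)" and h: "h \<in> H \<inter> TT m"
  shows "card (H \<inter> TT m) = card (H \<inter> AA m)"
proof -
  interpret group "GG m" using G_group m by blast
  have hc: "h \<in> carrier (GG m)" using h by (simp add: TT_def)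
  have "inj_on (\<lambda>b. h \<otimes>\<^bsub>GG m\<^esub> b) (H \<inter> AA m)"
    using inj_on_cmult[OF hc] by (rule inj_on_subset) (auto simp: AA_def)
  then show ?thesis using coset_T[OF m H h] card_image by metis
qed

lemma H_recover: assumes m: "m \<ge> 1" and H: "subgroup H (GG m)" and h: "h \<in> H \<inter> TT m"
  shows "H = (H \<inter> AA m) \<union> (\<lambda>b. h \<otimes>\<^bsub>GG m\<^esub> b) ` (H \<inter> AA m)"
proof -
  have "H = (H \<inter> AA m) \<union> (H \<inter> TT m)" using carrier_split subgroup.subset[OF H] by blast
  then show ?thesis using coset_T[OF m H h] by simp
qed


definition PP :: "nat \<Rightarrow> (int \<times> int \<times> int) set \<Rightarrow> (int \<times> int \<times> int) set \<Rightarrow> int set" where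
  "PP m B C = (\<lambda>(b,c). (fst (snd b) - fst (snd c)) mod 2^m) ` (B \<times> C)
            \<union> (\<lambda>(b,c). (-2 * (fst (snd b) + fst (snd c))) mod 2^m) ` (B \<times> C)"

lemma perm_cond:
  assumes m: "m \<ge> 1" and H: "subgroup H (GG m)" and K: "subgroup K (GG m)"
    and HK: "H <#>\<^bsub>GG m\<^esub> K = K <#>\<^bsub>GG m\<^esub> H"
    and h: "(c,i,1) \<in> H" and k: "(e,k0,1) \<in> K"
  shows "(2 * (i - k0)) mod 2^m \<in> PP m (H \<inter> AA m) (K \<inter> AA m)"
proof -
  interpret group "GG m" using G_group m by blast
  define hh :: int where "hh = 2^(m-1)"
  define n :: int where "n = 2^m"
  have nh: "n = 2*hh" using m pow2m hh_def n_def by simp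
  have hm: "2^(m - Suc 0) = hh" by (simp add: hh_def)
  have "(e,k0,1) \<otimes>\<^bsub>GG m\<^esub> (c,i,1) \<in> K <#>\<^bsub>GG m\<^esub> H" using h k unfolding set_mult_def by blast
  then have "(e,k0,1) \<otimes>\<^bsub>GG m\<^esub> (c,i,1) \<in> H <#>\<^bsub>GG m\<^esub> K" using HK by simp
  then obtain h' k' where h': "h' \<in> H" and k': "k' \<in> K" and eq: "(e,k0,1) \<otimes>\<^bsub>GG m\<^esub> (c,i,1) = h' \<otimes>\<^bsub>GG m\<^esub> k'"
    unfolding set_mult_def by blast
  obtain c1 i1 a1 where h'e: "h' = (c1,i1,a1)" by (cases h') auto
  obtain c2 i2 a2 where k'e: "k' = (c2,i2,a2)" by (cases k') auto
  have h'c: "h' \<in> carrier (GG m)" using H h' subgroup.subset by blast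
  have k'c: "k' \<in> carrier (GG m)" using K k' subgroup.subset by blast
  have a1: "a1 = 0 \<or> a1 = 1" using h'c unfolding h'e G_mem by blast
  have a2: "a2 = 0 \<or> a2 = 1" using k'c unfolding k'e G_mem by blast
  have lhs: "(e,k0,1) \<otimes>\<^bsub>GG m\<^esub> (c,i,1) = ((e + c) mod 2, (k0 - i + hh) mod n, 0)"
    unfolding G_mult n_def hm hh_def by simp
  have third: "(a1 + a2) mod 2 = 0" using eq unfolding lhs h'e k'e G_mult by simp
  have "a1 = a2" using a1 a2 third by auto
  then consider "a1 = 0" "a2 = 0" | "a1 = 1" "a2 = 1" using a1 by blast
  then show ?thesis
  proof cases
    case 1
    have e2: "(k0 - i + hh) mod n = (i1 + i2) mod n" using eq unfolding lhs h'e k'e G_mult 1 n_def by (simp add: hm)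
    have h'A: "h' \<in> H \<inter> AA m" using h' h'c 1 h'e by (simp add: AA_def)
    have k'A: "k' \<in> K \<inter> AA m" using k' k'c 1 k'e by (simp add: AA_def)
    have "(2 * (i - k0)) mod n = (-2 * (i1 + i2)) mod n"
    proof (rule modeq)
      have "n dvd (k0 - i + hh) - (i1 + i2)" using e2 by (simp add: mod_eq_dvd_iff)
      then have "n dvd (-2) * ((k0 - i + hh) - (i1 + i2)) + n" by (rule dvd_add[OF dvd_mult dvd_refl])
      moreover have "(-2) * ((k0 - i + hh) - (i1 + i2)) + n = 2 * (i - k0) - (-2 * (i1 + i2))"
        using nh by (simp add: algebra_simps)
      ultimately show "n dvd 2 * (i - k0) - (-2 * (i1 + i2))" by metis
    qed
    then show ?thesis unfolding PP_def using h'A k'A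
      by (intro UnI2 image_eqI[where x="(h',k')"]) (simp_all add: h'e k'e n_def)
  next
    case 2
    have e2: "(k0 - i + hh) mod n = (i1 - i2 + hh) mod n" using eq unfolding lhs h'e k'e G_mult 2 n_def hm hh_def by simp
    define u where "u = (i - i1 + hh) mod n"
    define v where "v = (k0 - i2 + hh) mod n"
    have hu: "(c,i,1) \<otimes>\<^bsub>GG m\<^esub> h' = ((c + c1) mod 2, u, 0)" unfolding h'e 2 G_mult u_def n_def hm hh_def by simp
    have kv: "(e,k0,1) \<otimes>\<^bsub>GG m\<^esub> k' = ((e + c2) mod 2, v, 0)" unfolding k'e 2 G_mult v_def n_def hm hh_def by simp
    have hc: "(c,i,1) \<in> carrier (GG m)" using H h subgroup.subset by blast
    have kc: "(e,k0,1) \<in> carrier (GG m)" using K k subgroup.subset by blast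
    have uA: "((c + c1) mod 2, u, 0) \<in> H \<inter> AA m"
      using subgroup.m_closed[OF H h h'] m_closed[OF hc h'c] unfolding hu by (simp add: AA_def)
    have vA: "((e + c2) mod 2, v, 0) \<in> K \<inter> AA m"
      using subgroup.m_closed[OF K k k'] m_closed[OF kc k'c] unfolding kv by (simp add: AA_def)
    have "(2 * (i - k0)) mod n = (u - v) mod n"
    proof -
      have "(u - v) mod n = ((i - i1 + hh) - (k0 - i2 + hh)) mod n" unfolding u_def v_def by (simp add: mod_diff_eq)
      also have "\<dots> = (2 * (i - k0)) mod n"
      proof (rule modeq)
        have "n dvd (k0 - i + hh) - (i1 - i2 + hh)" using e2 by (simp add: mod_eq_dvd_iff)
        moreover have "((k0 - i + hh) - (i1 - i2 + hh)) = ((i - i1 + hh) - (k0 - i2 + hh)) - 2 * (i - k0)"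
          by (simp add: algebra_simps)
        ultimately show "n dvd ((i - i1 + hh) - (k0 - i2 + hh)) - 2 * (i - k0)" by metis
      qed
      finally show ?thesis by simp
    qed
    then show ?thesis unfolding PP_def using uA vA
      by (intro UnI1 image_eqI[where x="(((c + c1) mod 2, u, 0), ((e + c2) mod 2, v, 0))"]) (simp_all add: n_def)
  qed
qed


lemma two_sol: assumes m: "m \<ge> 1"
  shows "card {x \<in> {0..<2^m}. (2 * (i - x)) mod 2^m = (p::int)} \<le> 2"
proof (cases "{x \<in> {0..<2^m}. (2 * (i - x)) mod 2^m = (p::int)} = {}")
  case True then show ?thesis unfolding True by simp
next
  case False
  define hh :: int where "hh = 2^(m-1)"
  have nh: "(2::int)^m = 2*hh" using m pow2m hh_def by simp
  have hpos: "hh > 0" by (simp add: hh_def)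
  define D where "D = {x \<in> {0..<2^m}. (2 * (i - x)) mod 2^m = (p::int)}"
  obtain x0 where x0: "x0 \<in> D" using False D_def by blast
  define r where "r = x0 mod hh"
  have "D \<subseteq> {r, r + hh}"
  proof
    fix x assume x: "x \<in> D"
    have xr: "0 \<le> x" "x < 2*hh" using x nh by (auto simp: D_def)
    have "(2 * (i - x)) mod (2*hh) = (2 * (i - x0)) mod (2*hh)" using x x0 nh by (simp add: D_def)
    then have "2*hh dvd (2 * (i - x)) - (2 * (i - x0))" by (simp add: mod_eq_dvd_iff)
    moreover have "(2 * (i - x)) - (2 * (i - x0)) = 2 * (x0 - x)" by simp
    ultimately have "2*hh dvd 2 * (x0 - x)" by metis
    then have "hh dvd (x0 - x)" by (simp only: dvd_mult_cancel_left) simp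
    then have "hh dvd (x - x0)" using dvd_diff_commute by blast
    then have xm: "x mod hh = r" unfolding r_def by (simp add: mod_eq_dvd_iff)
    show "x \<in> {r, r + hh}"
    proof (cases "x < hh")
      case True
      then have "x mod hh = x" using xr by simp
      then show ?thesis using xm by simp
    next
      case False
      then have "(x - hh) mod hh = x - hh" using xr by (intro mod_pos_pos_trivial) auto
      moreover have "(x - hh) mod hh = x mod hh" by simp
      ultimately show ?thesis using xm by simp
    qed
  qed
  then have "card D \<le> card {r, r + hh}" by (intro card_mono) auto
  also have "\<dots> \<le> 2" by (simp add: card_insert_le_m1)
  finally show ?thesis unfolding D_def .
qed

lemma TT_eq: "TT m = {0..<2} \<times> {0..<2^m} \<times> {1}"
  unfolding TT_def G_carrier by auto

lemma card_TT: "card (TT m) = 2^(m+1)"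
proof -
  have "card (TT m) = 2 * nat (2^m)" unfolding TT_eq by (simp add: card_cartesian_product)
  also have "nat (2^m) = 2^m" by (simp add: nat_power_eq)
  finally show ?thesis by simp
qed

lemma card_PP: assumes "finite B" "finite C" shows "card (PP m B C) \<le> 2 * card B * card C"
proof -
  have "card (PP m B C) \<le> card ((\<lambda>(b,c). (fst (snd b) - fst (snd c)) mod 2^m) ` (B \<times> C))
            + card ((\<lambda>(b,c). (-2 * (fst (snd b) + fst (snd c))) mod 2^m) ` (B \<times> C))"
    unfolding PP_def by (rule card_Un_le)
  also have "\<dots> \<le> card (B \<times> C) + card (B \<times> C)" by (intro add_mono card_image_le) (simp_all add: assms)
  finally show ?thesis by (simp add: card_cartesian_product)
qed

lemma card_Kset: assumes m: "m \<ge> 1" and fP: "finite P"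
  shows "card {k \<in> TT m. (2 * (i - fst (snd k))) mod 2^m \<in> P} \<le> 4 * card P"
proof -
  define D where "D = {x \<in> {0..<2^m}. (2 * (i - x)) mod 2^m \<in> P}"
  have D_sub: "D \<subseteq> (\<Union>p\<in>P. {x \<in> {0..<2^m}. (2 * (i - x)) mod 2^m = (p::int)})" unfolding D_def by blast
  have "card D \<le> card (\<Union>p\<in>P. {x \<in> {0..<2^m}. (2 * (i - x)) mod 2^m = (p::int)})"
    using fP by (intro card_mono[OF _ D_sub] finite_UN_I) (auto intro: finite_subset[of _ "{0..<2^m}"])
  also have "\<dots> \<le> (\<Sum>p\<in>P. card {x \<in> {0..<2^m}. (2 * (i - x)) mod 2^m = (p::int)})" by (rule card_UN_le[OF fP])
  also have "\<dots> \<le> (\<Sum>p\<in>P. 2)" by (intro sum_mono two_sol[OF m])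
  finally have cD: "card D \<le> 2 * card P" by simp
  have sub: "{k \<in> TT m. (2 * (i - fst (snd k))) mod 2^m \<in> P} \<subseteq> {0..<2} \<times> D \<times> {1}"
    unfolding TT_eq D_def by auto
  have finD: "finite D" unfolding D_def by (rule finite_subset[of _ "{0..<2^m}"]) auto
  have "card {k \<in> TT m. (2 * (i - fst (snd k))) mod 2^m \<in> P} \<le> card ({0..<2::int} \<times> D \<times> {1::int})"
    by (rule card_mono[OF _ sub]) (simp add: finD)
  also have "\<dots> = 2 * card D" by (simp add: card_cartesian_product)
  finally show ?thesis using cD by simp
qed

lemma card_W: assumes m: "m \<ge> 1" and fP: "finite P"
  shows "card {(h,k). h \<in> TT m \<and> k \<in> TT m \<and> (2 * (fst (snd h) - fst (snd k))) mod 2^m \<in> P}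
         \<le> 2^(m+1) * (4 * card P)"
proof -
  have finT: "finite (TT m)" unfolding TT_eq by simp
  have eq: "{(h,k). h \<in> TT m \<and> k \<in> TT m \<and> (2 * (fst (snd h) - fst (snd k))) mod 2^m \<in> P}
     = Sigma (TT m) (\<lambda>h. {k \<in> TT m. (2 * (fst (snd h) - fst (snd k))) mod 2^m \<in> P})" by auto
  have "card (Sigma (TT m) (\<lambda>h. {k \<in> TT m. (2 * (fst (snd h) - fst (snd k))) mod 2^m \<in> P}))
     = (\<Sum>h\<in>TT m. card {k \<in> TT m. (2 * (fst (snd h) - fst (snd k))) mod 2^m \<in> P})"
    using finT by (intro card_SigmaI) auto
  also have "\<dots> \<le> (\<Sum>h\<in>TT m. 4 * card P)" by (intro sum_mono card_Kset[OF m fP])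
  also have "\<dots> = 2^(m+1) * (4 * card P)" by (simp add: card_TT)
  finally show ?thesis using eq by simp
qed


lemma finite_sub: assumes "subgroup H (GG m)" shows "finite H"
proof (rule finite_subset)
  show "H \<subseteq> carrier (GG m)" using assms by (rule subgroup.subset)
  show "finite (carrier (GG m))" unfolding G_carrier by simp
qed

lemma Ly_T: assumes "H \<in> Ly m" shows "subgroup H (GG m)" and "\<exists>h. h \<in> H \<inter> TT m"
proof -
  show sg: "subgroup H (GG m)" using assms by (simp add: Ly_def subgroup_lattice_def)
  have "\<not> H \<subseteq> AA m" using assms by (simp add: Ly_def LA_def)
  then obtain h where "h \<in> H" "h \<notin> AA m" by blast
  then show "\<exists>h. h \<in> H \<inter> TT m" using carrier_split subgroup.subset[OF sg] by blast
qed

lemma main_count: assumes m: "m \<ge> 1" and B: "B \<in> LA m" and C: "C \<in> LA m"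
  shows "card {(H,K). H \<in> Ly m \<and> K \<in> Ly m \<and> H <#>\<^bsub>GG m\<^esub> K = K <#>\<^bsub>GG m\<^esub> H \<and> H \<inter> AA m = B \<and> K \<inter> AA m = C}
     \<le> 2^(m+4)"
proof -
  define XS where "XS = {(H,K). H \<in> Ly m \<and> K \<in> Ly m \<and> set_mult (GG m) H K = set_mult (GG m) K H \<and> H \<inter> AA m = B \<and> K \<inter> AA m = C}"
  define P where "P = PP m B C"
  define W where "W = {(h,k). h \<in> TT m \<and> k \<in> TT m \<and> (2 * (fst (snd h) - fst (snd k))) mod 2^m \<in> P}"
  define S where "S = Sigma XS (\<lambda>p. (fst p \<inter> TT m) \<times> (snd p \<inter> TT m))"
  have finX: "finite XS"
  proof (rule finite_subset[of _ "subgroup_lattice (GG m) \<times> subgroup_lattice (GG m)"])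
    show "XS \<subseteq> subgroup_lattice (GG m) \<times> subgroup_lattice (GG m)" unfolding XS_def Ly_def by auto
  qed (simp add: L_finite)
  have sgB: "subgroup B (GG m)" and sgC: "subgroup C (GG m)" using B C by (auto simp: LA_def subgroup_lattice_def)
  have finB: "finite B" and finC: "finite C" using sgB sgC finite_sub by auto
  have posB: "card B > 0" using finB subgroup.one_closed[OF sgB] card_gt_0_iff by blast
  have posC: "card C > 0" using finC subgroup.one_closed[OF sgC] card_gt_0_iff by blast
  have finP: "finite P" unfolding P_def PP_def using finB finC by simp
  have cardS: "card S = card XS * (card B * card C)"
  proof -
    have "card S = (\<Sum>p\<in>XS. card ((fst p \<inter> TT m) \<times> (snd p \<inter> TT m)))"
      unfolding S_def using finX by (intro card_SigmaI) (auto simp: TT_eq)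
    also have "\<dots> = (\<Sum>p\<in>XS. card B * card C)"
    proof (rule sum.cong[OF refl])
      fix p assume p: "p \<in> XS"
      obtain H K where pe: "p = (H,K)" by (cases p)
      have HL: "H \<in> Ly m" and KL: "K \<in> Ly m" and HB: "H \<inter> AA m = B" and KC: "K \<inter> AA m = C"
        using p pe by (auto simp: XS_def)
      obtain h where h: "h \<in> H \<inter> TT m" using Ly_T[OF HL] by blast
      obtain k where k: "k \<in> K \<inter> TT m" using Ly_T[OF KL] by blast
      have "card (H \<inter> TT m) = card B" using card_T[OF m Ly_T(1)[OF HL] h] HB by simp
      moreover have "card (K \<inter> TT m) = card C" using card_T[OF m Ly_T(1)[OF KL] k] KC by simp
      ultimately show "card ((fst p \<inter> TT m) \<times> (snd p \<inter> TT m)) = card B * card C"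
        by (simp add: pe card_cartesian_product)
    qed
    finally show ?thesis by simp
  qed
  have inj: "inj_on snd S"
  proof (rule inj_onI)
    fix x y assume x: "x \<in> S" and y: "y \<in> S" and e: "snd x = snd y"
    obtain H K h k where xe: "x = ((H,K),(h,k))" by (cases x) auto
    obtain H' K' h' k' where ye: "y = ((H',K'),(h',k'))" by (cases y) auto
    have hk: "h' = h" "k' = k" using e xe ye by auto
    have X1: "H \<in> Ly m" "K \<in> Ly m" "H \<inter> AA m = B" "K \<inter> AA m = C" "h \<in> H \<inter> TT m" "k \<in> K \<inter> TT m"
      using x xe by (auto simp: S_def XS_def)
    have X2: "H' \<in> Ly m" "K' \<in> Ly m" "H' \<inter> AA m = B" "K' \<inter> AA m = C" "h \<in> H' \<inter> TT m" "k \<in> K' \<inter> TT m"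
      using y ye hk by (auto simp: S_def XS_def)
    have "H = H'" using H_recover[OF m Ly_T(1)[OF X1(1)] X1(5)] H_recover[OF m Ly_T(1)[OF X2(1)] X2(5)] X1(3) X2(3) by simp
    moreover have "K = K'" using H_recover[OF m Ly_T(1)[OF X1(2)] X1(6)] H_recover[OF m Ly_T(1)[OF X2(2)] X2(6)] X1(4) X2(4) by simp
    ultimately show "x = y" using xe ye hk by simp
  qed
  have sub: "snd ` S \<subseteq> W"
  proof
    fix z assume "z \<in> snd ` S"
    then obtain H K h k where xS: "((H,K),(h,k)) \<in> S" and ze: "z = (h,k)" by force
    have X1: "H \<in> Ly m" "K \<in> Ly m" "H \<inter> AA m = B" "K \<inter> AA m = C" "h \<in> H \<inter> TT m" "k \<in> K \<inter> TT m"
      "H <#>\<^bsub>GG m\<^esub> K = K <#>\<^bsub>GG m\<^esub> H"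
      using xS by (auto simp: S_def XS_def)
    obtain c i where he: "h = (c,i,1)" using X1(5) by (cases h) (auto simp: TT_def)
    obtain e k0 where ke: "k = (e,k0,1)" using X1(6) by (cases k) (auto simp: TT_def)
    have "(2 * (i - k0)) mod 2^m \<in> PP m (H \<inter> AA m) (K \<inter> AA m)"
      using perm_cond[OF m Ly_T(1)[OF X1(1)] Ly_T(1)[OF X1(2)] X1(7)] X1(5,6) he ke by blast
    then show "z \<in> W" using X1 he ke ze by (simp add: W_def P_def)
  qed
  have finW: "finite W" unfolding W_def
    by (rule finite_subset[of _ "TT m \<times> TT m"]) (auto simp: TT_eq)
  have "card XS * (card B * card C) = card (snd ` S)" using cardS card_image[OF inj] by simp
  also have "\<dots> \<le> card W" by (rule card_mono[OF finW sub])
  also have "\<dots> \<le> 2^(m+1) * (4 * card P)" unfolding W_def by (rule card_W[OF m finP])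
  also have "\<dots> \<le> 2^(m+1) * (4 * (2 * card B * card C))"
    using card_PP[OF finB finC, of m] unfolding P_def by simp
  also have "\<dots> = 2^(m+4) * (card B * card C)" by (simp add: power_add)
  finally have "card XS * (card B * card C) \<le> 2^(m+4) * (card B * card C)" .
  then have "card XS \<le> 2^(m+4)" using posB posC by simp
  then show ?thesis unfolding XS_def .
qed


lemma AA_sub: assumes m: "m \<ge> 1" shows "subgroup (AA m) (GG m)"
proof -
  interpret group "GG m" using G_group m by blast
  show ?thesis
  proof (rule subgroupI)
    show "AA m \<subseteq> carrier (GG m)" by (auto simp: AA_def)
    have "(0,0,0) \<in> AA m" unfolding AA_def using G_mem[of 0 0 0 m] by simp
    then show "AA m \<noteq> {}" by blast
    fix x y assume x: "x \<in> AA m" and y: "y \<in> AA m"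
    obtain c i where xe: "x = (c,i,0)" using x by (cases x) (auto simp: AA_def)
    obtain d k where ye: "y = (d,k,0)" using y by (cases y) (auto simp: AA_def)
    have xc: "x \<in> carrier (GG m)" and yc: "y \<in> carrier (GG m)" using x y by (auto simp: AA_def)
    have "inv\<^bsub>GG m\<^esub> x = (c, (-i) mod 2^m, 0)" using G_inv[OF m xc[unfolded xe]] xe by simp
    then show "inv\<^bsub>GG m\<^esub> x \<in> AA m" using inv_closed[OF xc] by (simp add: AA_def)
    have "snd (snd (x \<otimes>\<^bsub>GG m\<^esub> y)) = 0" unfolding xe ye G_mult by simp
    then show "x \<otimes>\<^bsub>GG m\<^esub> y \<in> AA m" using m_closed[OF xc yc] by (simp add: AA_def)
  qed
qed

lemma card_S: assumes m: "m \<ge> 1"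
  shows "card {(H, K). H \<in> subgroup_lattice (GG m) \<and> K \<in> subgroup_lattice (GG m) \<and>
                     H <#>\<^bsub>GG m\<^esub> K = K <#>\<^bsub>GG m\<^esub> H}
     \<le> 2 * card (LA m) * card (subgroup_lattice (GG m)) + card (LA m)^2 * 2^(m+4)"
proof -
  interpret group "GG m" using G_group m by blast
  define L where "L = subgroup_lattice (GG m)"
  define SS where "SS = {(H, K). H \<in> L \<and> K \<in> L \<and> set_mult (GG m) H K = set_mult (GG m) K H}"
  define XS where "XS = (\<lambda>(B,C). {(H,K). H \<in> Ly m \<and> K \<in> Ly m \<and> set_mult (GG m) H K = set_mult (GG m) K H \<and> H \<inter> AA m = B \<and> K \<inter> AA m = C})"
  have finL: "finite L" unfolding L_def by (rule L_finite)
  have LAL: "LA m \<subseteq> L" unfolding LA_def L_def by auto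
  have finLA: "finite (LA m)" using finite_subset[OF LAL finL] .
  have sub: "SS \<subseteq> (LA m \<times> L) \<union> (L \<times> LA m) \<union> (\<Union>p\<in>LA m \<times> LA m. XS p)"
  proof
    fix z assume z: "z \<in> SS"
    obtain H K where ze: "z = (H,K)" by (cases z)
    have HL: "H \<in> L" and KL: "K \<in> L" and HK: "set_mult (GG m) H K = set_mult (GG m) K H"
      using z ze by (auto simp: SS_def)
    show "z \<in> (LA m \<times> L) \<union> (L \<times> LA m) \<union> (\<Union>p\<in>LA m \<times> LA m. XS p)"
    proof (cases "H \<in> LA m \<or> K \<in> LA m")
      case True then show ?thesis using HL KL ze by auto
    next
      case False
      then have Hy: "H \<in> Ly m" and Ky: "K \<in> Ly m" using HL KL by (auto simp: Ly_def L_def)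
      have "subgroup (H \<inter> AA m) (GG m)" using subgroups_Inter_pair[OF Ly_T(1)[OF Hy] AA_sub[OF m]] .
      then have BA: "H \<inter> AA m \<in> LA m" by (simp add: LA_def subgroup_lattice_def)
      have "subgroup (K \<inter> AA m) (GG m)" using subgroups_Inter_pair[OF Ly_T(1)[OF Ky] AA_sub[OF m]] .
      then have CA: "K \<inter> AA m \<in> LA m" by (simp add: LA_def subgroup_lattice_def)
      have "z \<in> XS (H \<inter> AA m, K \<inter> AA m)" using Hy Ky HK ze by (simp add: XS_def)
      then show ?thesis using BA CA by blast
    qed
  qed
  have finXS: "finite (XS p)" for p
  proof -
    obtain B C where pe: "p = (B,C)" by (cases p)
    show ?thesis unfolding pe XS_def
      by (rule finite_subset[OF _ finite_cartesian_product[OF finL finL]]) (auto simp: Ly_def L_def)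
  qed
  have "card SS \<le> card ((LA m \<times> L) \<union> (L \<times> LA m) \<union> (\<Union>p\<in>LA m \<times> LA m. XS p))"
    using finL finLA finXS by (intro card_mono[OF _ sub]) auto
  also have "\<dots> \<le> card ((LA m \<times> L) \<union> (L \<times> LA m)) + card (\<Union>p\<in>LA m \<times> LA m. XS p)"
    by (rule card_Un_le)
  also have "card ((LA m \<times> L) \<union> (L \<times> LA m)) \<le> card (LA m \<times> L) + card (L \<times> LA m)"
    by (rule card_Un_le)
  also have "card (\<Union>p\<in>LA m \<times> LA m. XS p) \<le> (\<Sum>p\<in>LA m \<times> LA m. card (XS p))"
    using finLA by (intro card_UN_le) simp
  also have "(\<Sum>p\<in>LA m \<times> LA m. card (XS p)) \<le> (\<Sum>p\<in>LA m \<times> LA m. 2^(m+4))"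
  proof (rule sum_mono)
    fix p assume p: "p \<in> LA m \<times> LA m"
    obtain B C where pe: "p = (B,C)" by (cases p)
    show "card (XS p) \<le> 2^(m+4)" using main_count[OF m, of B C] p unfolding pe XS_def by simp
  qed
  finally have "card SS \<le> 2 * card (LA m) * card L + card (LA m)^2 * 2^(m+4)"
    by (simp add: card_cartesian_product power2_eq_square algebra_simps)
  then show ?thesis unfolding SS_def L_def .
qed

lemma sd_bound: assumes m: "m \<ge> 1"
  shows "sd (GG m) \<le> (2 * real ((m+1) * (2*(m+1)+1)) + 16 * real ((m+1) * (2*(m+1)+1))^2) / 2^m"
proof -
  define q :: real where "q = real ((m+1) * (2*(m+1)+1))"
  define n :: real where "n = real (card (subgroup_lattice (GG m)))"
  define l :: real where "l = real (card (LA m))"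
  define a :: real where "a = real (card {(H, K). H \<in> subgroup_lattice (GG m) \<and> K \<in> subgroup_lattice (GG m) \<and>
                     H <#>\<^bsub>GG m\<^esub> K = K <#>\<^bsub>GG m\<^esub> H})"
  have sd_eq: "sd (GG m) = a / n^2" unfolding sd_def a_def n_def by simp
  have nge: "2^m \<le> n" using card_L_ge[OF m] unfolding n_def
    by (metis of_nat_le_iff of_nat_numeral of_nat_power)
  have npos: "n > 0" using nge by (smt (verit) zero_less_power)
  have l0: "0 \<le> l" unfolding l_def by simp
  have lq: "l \<le> q" unfolding l_def q_def using card_LA[OF m] by (simp only: of_nat_le_iff)
  have aS: "a \<le> 2 * l * n + l^2 * 2^(m+4)"
    unfolding a_def l_def n_def using card_S[OF m]
    by (metis (mono_tags, lifting) of_nat_add of_nat_le_iff of_nat_mult of_nat_numeral of_nat_power)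
  have p2: "(0::real) < 2^m" by simp
  have "a / n^2 \<le> (2 * l * n + l^2 * 2^(m+4)) / n^2"
    using aS npos by (intro divide_right_mono) auto
  also have "\<dots> = 2 * l / n + 16 * l^2 * (2^m / n^2)"
    using npos by (simp add: field_simps power_add power2_eq_square)
  also have "\<dots> \<le> 2 * q / 2^m + 16 * q^2 * (1 / 2^m)"
  proof (rule add_mono)
    show "2 * l / n \<le> 2 * q / 2^m"
      using lq l0 nge p2 by (intro frac_le) auto
    have "2^m / n^2 \<le> 2^m / (2^m)^2" using nge p2 npos by (intro divide_left_mono power_mono) auto
    also have "\<dots> = 1 / 2^m" using p2 by (simp add: power2_eq_square)
    finally have B1: "2^m / n^2 \<le> 1 / 2^m" .
    have B2: "16 * l^2 \<le> 16 * q^2" using lq l0 by (intro mult_left_mono power_mono) auto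
    show "16 * l^2 * (2^m / n^2) \<le> 16 * q^2 * (1 / 2^m)"
      by (rule mult_mono[OF B2 B1]) auto
  qed
  also have "\<dots> = (2 * q + 16 * q^2) / 2^m" by (simp add: field_simps)
  finally show ?thesis unfolding sd_eq q_def .
qed

theorem corollary2p8:
  shows "(\<lambda>m. sd (DirProd Z2 (quaternion_group m))) \<longlonglongrightarrow> 0"
proof (rule real_tendsto_sandwich)
  show "\<forall>\<^sub>F m in sequentially. 0 \<le> sd (DirProd Z2 (quaternion_group m))"
    by (simp add: sd_def)
  show "\<forall>\<^sub>F m in sequentially. sd (DirProd Z2 (quaternion_group m))
      \<le> (2 * real ((m+1) * (2*(m+1)+1)) + 16 * real ((m+1) * (2*(m+1)+1))^2) / 2^m"
    using eventually_ge_at_top[of 1] by eventually_elim (rule sd_bound)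
  show "(\<lambda>m. 0) \<longlonglongrightarrow> (0::real)" by simp
  show "(\<lambda>m::nat. (2 * real ((m+1) * (2*(m+1)+1)) + 16 * real ((m+1) * (2*(m+1)+1))^2) / 2^m) \<longlonglongrightarrow> 0"
    by real_asymp
qed


end
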